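(* Let $G$ be a cograph with cotree $T$, and let $d$ be a non-negative integer with $d\le\chi(G)$. Set $h=\chi(G)-d$. Among all $h$-colourings of $G$ with the minimum possible number of monochromatic edges, there is one that satisfies Property 1. Property 1 requires the following for every 0-node $p$ of $T$ with children $q,r$: the colour classes within $T_q$ and within $T_r$ can each be ordered by non-increasing size so that, for every $i\in[\chi(T_p)]$, the $i$-th largest colour class of $T_q$ and the $i$-th largest colour class of $T_r$ have the same colour. Here an empty colour class is considered to have the same colour as every other class.
   Context: A cotree of a cograph $G$ is a rooted binary tree $T$ whose leaves correspond to the vertices of $G$ and whose interior nodes are labelled 0 or 1. To each node $p$ a cograph $T_p$ is associated: $T_p=K_1$ for a leaf; $T_p=T_q+T_r$ (disjoint union) if $p$ is a 0-node with children $q,r$; and $T_p=T_q\times T_r$ (join, i.e. all edges between $T_q$ and $T_r$ added) if $p$ is a 1-node with children $q,r$. The cograph associated with the root is $G$. Every cograph has a cotree. An $h$-colouring is any map $c:V(G)\to\{1,\dots,h\}$, not necessarily proper. An edge is monochromatic if both endpoints get the same colour. For a node $p$, the colour classes of $c$ in $T_p$ are the sets $c^{-1}(j)\cap V(T_p)$. *)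

theory Defs
  imports Main
begin

text \<open>Cotrees: leaves are vertices, interior nodes are 0-nodes (disjoint union)
  or 1-nodes (join).\<close>
datatype 'a cotree = Leaf 'a | Node0 "'a cotree" "'a cotree" | Node1 "'a cotree" "'a cotree"

fun verts :: "'a cotree \<Rightarrow> 'a set" where
  "verts (Leaf x) = {x}"
| "verts (Node0 q r) = verts q \<union> verts r"
| "verts (Node1 q r) = verts q \<union> verts r"

fun wf_cotree :: "'a cotree \<Rightarrow> bool" where
  "wf_cotree (Leaf x) = True"
| "wf_cotree (Node0 q r) = (wf_cotree q \<and> wf_cotree r \<and> verts q \<inter> verts r = {})"
| "wf_cotree (Node1 q r) = (wf_cotree q \<and> wf_cotree r \<and> verts q \<inter> verts r = {})"

fun adj :: "'a cotree \<Rightarrow> 'a \<Rightarrow> 'a \<Rightarrow> bool" where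
  "adj (Leaf x) u v = False"
| "adj (Node0 q r) u v = (adj q u v \<or> adj r u v)"
| "adj (Node1 q r) u v = (adj q u v \<or> adj r u v \<or>
      (u \<in> verts q \<and> v \<in> verts r) \<or> (u \<in> verts r \<and> v \<in> verts q))"

fun nodes :: "'a cotree \<Rightarrow> 'a cotree set" where
  "nodes (Leaf x) = {Leaf x}"
| "nodes (Node0 q r) = insert (Node0 q r) (nodes q \<union> nodes r)"
| "nodes (Node1 q r) = insert (Node1 q r) (nodes q \<union> nodes r)"

definition proper_colouring :: "'a cotree \<Rightarrow> nat \<Rightarrow> ('a \<Rightarrow> nat) \<Rightarrow> bool" where
  "proper_colouring T k c \<longleftrightarrow> (\<forall>v\<in>verts T. c v \<in> {1..k}) \<and> (\<forall>u v. adj T u v \<longrightarrow> c u \<noteq> c v)"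

definition chi :: "'a cotree \<Rightarrow> nat" where
  "chi T = (LEAST k. \<exists>c. proper_colouring T k c)"

definition h_colouring :: "'a cotree \<Rightarrow> nat \<Rightarrow> ('a \<Rightarrow> nat) \<Rightarrow> bool" where
  "h_colouring T h c \<longleftrightarrow> (\<forall>v\<in>verts T. c v \<in> {1..h})"

definition mono_edges :: "'a cotree \<Rightarrow> ('a \<Rightarrow> nat) \<Rightarrow> 'a set set" where
  "mono_edges T c = {{u, v} | u v. adj T u v \<and> c u = c v}"

definition optimal_h_colouring :: "'a cotree \<Rightarrow> nat \<Rightarrow> ('a \<Rightarrow> nat) \<Rightarrow> bool" where
  "optimal_h_colouring T h c \<longleftrightarrow> h_colouring T h c \<and>
     (\<forall>c'. h_colouring T h c' \<longrightarrow> card (mono_edges T c) \<le> card (mono_edges T c'))"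

definition colour_class :: "'a cotree \<Rightarrow> ('a \<Rightarrow> nat) \<Rightarrow> nat \<Rightarrow> 'a set" where
  "colour_class T c j = {v \<in> verts T. c v = j}"

text \<open>An ordering of the h colour classes of T_p by non-increasing size:
  sigma i is the colour of the i-th largest class.\<close>
definition class_ordering :: "'a cotree \<Rightarrow> nat \<Rightarrow> ('a \<Rightarrow> nat) \<Rightarrow> (nat \<Rightarrow> nat) \<Rightarrow> bool" where
  "class_ordering T h c \<sigma> \<longleftrightarrow> bij_betw \<sigma> {1..h} {1..h} \<and>
     (\<forall>i\<in>{1..h}. \<forall>j\<in>{1..h}. i \<le> j \<longrightarrow>
        card (colour_class T c (\<sigma> j)) \<le> card (colour_class T c (\<sigma> i)))"

definition property1 :: "'a cotree \<Rightarrow> nat \<Rightarrow> ('a \<Rightarrow> nat) \<Rightarrow> bool" where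
  "property1 T h c \<longleftrightarrow> (\<forall>q r. Node0 q r \<in> nodes T \<longrightarrow>
     (\<exists>\<sigma>q \<sigma>r. class_ordering q h c \<sigma>q \<and> class_ordering r h c \<sigma>r \<and>
        (\<forall>i\<in>{1..min (chi (Node0 q r)) h}.
           \<sigma>q i = \<sigma>r i \<or> colour_class q c (\<sigma>q i) = {} \<or> colour_class r c (\<sigma>r i) = {})))"

end

theory Submission
  imports Defs "HOL-Library.Multiset"
begin



lemma verts_finite: "finite (verts T)"
  by (induction T) auto

lemma verts_ne: "verts T \<noteq> {}"
  by (induction T) auto

lemma adj_verts: "adj T u v \<Longrightarrow> u \<in> verts T \<and> v \<in> verts T"
  by (induction T) auto

lemma adj_sym: "adj T u v \<Longrightarrow> adj T v u"
  by (induction T) auto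

lemma nodes_self: "T \<in> nodes T"
  by (cases T) auto

lemma nodes_trans: "x \<in> nodes T \<Longrightarrow> y \<in> nodes x \<Longrightarrow> y \<in> nodes T"
  by (induction T) auto

lemma nodes_verts: "x \<in> nodes T \<Longrightarrow> verts x \<subseteq> verts T"
  by (induction T) auto

lemma nodes_wf: "wf_cotree T \<Longrightarrow> x \<in> nodes T \<Longrightarrow> wf_cotree x"
  by (induction T) auto

lemma adj_irrefl: "wf_cotree T \<Longrightarrow> \<not> adj T u u"
  by (induction T) (auto dest: adj_verts)

lemma adj_local: "wf_cotree T \<Longrightarrow> x \<in> nodes T \<Longrightarrow> u \<in> verts x \<Longrightarrow> v \<in> verts x
   \<Longrightarrow> adj T u v \<longleftrightarrow> adj x u v"
proof (induction T)
  case (Leaf y) then show ?case by auto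
next
  case (Node0 a b)
  show ?case
  proof (cases "x = Node0 a b")
    case True then show ?thesis by simp
  next
    case False
    then have "x \<in> nodes a \<or> x \<in> nodes b" using Node0.prems by auto
    then show ?thesis
    proof
      assume xa: "x \<in> nodes a"
      then have "u \<in> verts a" "v \<in> verts a" using Node0.prems nodes_verts by blast+
      then show ?thesis using Node0 xa by (auto dest: adj_verts)
    next
      assume xb: "x \<in> nodes b"
      then have "u \<in> verts b" "v \<in> verts b" using Node0.prems nodes_verts by blast+
      then show ?thesis using Node0 xb by (auto dest: adj_verts)
    qed
  qed
next
  case (Node1 a b)
  show ?case
  proof (cases "x = Node1 a b")
    case True then show ?thesis by simp
  next
    case False
    then have "x \<in> nodes a \<or> x \<in> nodes b" using Node1.prems by auto
    then show ?thesis
    proof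
      assume xa: "x \<in> nodes a"
      then have "u \<in> verts a" "v \<in> verts a" using Node1.prems nodes_verts by blast+
      then show ?thesis using Node1 xa by (auto dest: adj_verts)
    next
      assume xb: "x \<in> nodes b"
      then have "u \<in> verts b" "v \<in> verts b" using Node1.prems nodes_verts by blast+
      then show ?thesis using Node1 xb by (auto dest: adj_verts)
    qed
  qed
qed

lemma adj_module: "wf_cotree T \<Longrightarrow> x \<in> nodes T \<Longrightarrow> u \<in> verts x \<Longrightarrow> u' \<in> verts x
   \<Longrightarrow> v \<notin> verts x \<Longrightarrow> adj T u v \<Longrightarrow> adj T u' v"
proof (induction T)
  case (Leaf y) then show ?case by auto
next
  case (Node0 a b)
  show ?case
  proof (cases "x = Node0 a b")
    case True then show ?thesis using Node0.prems by (auto dest: adj_verts)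
  next
    case False
    then have "x \<in> nodes a \<or> x \<in> nodes b" using Node0.prems by auto
    then show ?thesis
    proof
      assume xa: "x \<in> nodes a"
      then have "u \<in> verts a" "u' \<in> verts a" using Node0.prems nodes_verts by blast+
      then show ?thesis using Node0 xa by (auto dest: adj_verts)
    next
      assume xb: "x \<in> nodes b"
      then have "u \<in> verts b" "u' \<in> verts b" using Node0.prems nodes_verts by blast+
      then show ?thesis using Node0 xb by (auto dest: adj_verts)
    qed
  qed
next
  case (Node1 a b)
  show ?case
  proof (cases "x = Node1 a b")
    case True then show ?thesis using Node1.prems by (auto dest: adj_verts)
  next
    case False
    then have "x \<in> nodes a \<or> x \<in> nodes b" using Node1.prems by auto
    then show ?thesis
    proof
      assume xa: "x \<in> nodes a"
      then have "u \<in> verts a" "u' \<in> verts a" using Node1.prems nodes_verts by blast+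
      then show ?thesis using Node1 xa by (auto dest: adj_verts)
    next
      assume xb: "x \<in> nodes b"
      then have "u \<in> verts b" "u' \<in> verts b" using Node1.prems nodes_verts by blast+
      then show ?thesis using Node1 xb by (auto dest: adj_verts)
    qed
  qed
qed

lemma zero_cross: "wf_cotree T \<Longrightarrow> Node0 q r \<in> nodes T \<Longrightarrow> u \<in> verts q \<Longrightarrow> v \<in> verts r
  \<Longrightarrow> \<not> adj T u v"
proof
  assume wf: "wf_cotree T" and n: "Node0 q r \<in> nodes T" and u: "u \<in> verts q" and v: "v \<in> verts r"
    and a: "adj T u v"
  have w: "wf_cotree (Node0 q r)" using nodes_wf[OF wf n] .
  have "adj (Node0 q r) u v" using adj_local[OF wf n] u v a by simp
  then have "adj q u v \<or> adj r u v" by simp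
  then show False using w u v by (auto dest: adj_verts)
qed



definition nbr :: "'a cotree \<Rightarrow> 'a cotree \<Rightarrow> 'a set" where
  "nbr T x = {v \<in> verts T - verts x. \<forall>u\<in>verts x. adj T u v}"

definition Wt :: "'a cotree \<Rightarrow> 'a cotree \<Rightarrow> ('a \<Rightarrow> nat) \<Rightarrow> nat \<Rightarrow> nat" where
  "Wt T x c j = card {v \<in> nbr T x. c v = j}"

lemma cross_char: "wf_cotree T \<Longrightarrow> x \<in> nodes T \<Longrightarrow> u \<in> verts x \<Longrightarrow> v \<notin> verts x
  \<Longrightarrow> adj T u v \<longleftrightarrow> v \<in> nbr T x"
proof
  assume wf: "wf_cotree T" and x: "x \<in> nodes T" and u: "u \<in> verts x" and v: "v \<notin> verts x"
  { assume a: "adj T u v"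
    have "\<forall>u'\<in>verts x. adj T u' v" using adj_module[OF wf x u _ v a] by blast
    moreover have "v \<in> verts T" using adj_verts[OF a] by blast
    ultimately show "v \<in> nbr T x" unfolding nbr_def using v by blast }
  { assume "v \<in> nbr T x" then show "adj T u v" unfolding nbr_def using u by blast }
qed

lemma mono_split:
  "mono_edges T e = {{u, v} | u v. adj T u v \<and> e u = e v \<and> u \<in> verts x \<and> v \<in> verts x}
     \<union> {{u, v} | u v. adj T u v \<and> e u = e v \<and> u \<notin> verts x \<and> v \<notin> verts x}
     \<union> {{u, v} | u v. adj T u v \<and> e u = e v \<and> u \<in> verts x \<and> v \<notin> verts x}"
proof (rule set_eqI, rule iffI)
  fix E assume "E \<in> mono_edges T e"
  then obtain u v where E: "E = {u,v}" "adj T u v" "e u = e v" unfolding mono_edges_def by blast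
  have E': "E = {v,u}" "adj T v u" using E(1) adj_sym[OF E(2)] by (auto simp: insert_commute)
  show "E \<in> {{u, v} | u v. adj T u v \<and> e u = e v \<and> u \<in> verts x \<and> v \<in> verts x}
     \<union> {{u, v} | u v. adj T u v \<and> e u = e v \<and> u \<notin> verts x \<and> v \<notin> verts x}
     \<union> {{u, v} | u v. adj T u v \<and> e u = e v \<and> u \<in> verts x \<and> v \<notin> verts x}"
  proof -
    consider "u \<in> verts x" "v \<in> verts x" | "u \<notin> verts x" "v \<notin> verts x"
      | "u \<in> verts x" "v \<notin> verts x" | "u \<notin> verts x" "v \<in> verts x" by blast
    then show ?thesis
    proof cases
      case 1 then have "E \<in> {{u, v} | u v. adj T u v \<and> e u = e v \<and> u \<in> verts x \<and> v \<in> verts x}"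
        using E by (intro CollectI exI[of _ u] exI[of _ v]) simp
      then show ?thesis by (rule UnI1[OF UnI1])
    next
      case 2 then have "E \<in> {{u, v} | u v. adj T u v \<and> e u = e v \<and> u \<notin> verts x \<and> v \<notin> verts x}"
        using E by (intro CollectI exI[of _ u] exI[of _ v]) simp
      then show ?thesis by (rule UnI1[OF UnI2])
    next
      case 3 then have "E \<in> {{u, v} | u v. adj T u v \<and> e u = e v \<and> u \<in> verts x \<and> v \<notin> verts x}"
        using E by (intro CollectI exI[of _ u] exI[of _ v]) simp
      then show ?thesis by (rule UnI2)
    next
      case 4 then have "E \<in> {{u, v} | u v. adj T u v \<and> e u = e v \<and> u \<in> verts x \<and> v \<notin> verts x}"
        using E' E(3) by (intro CollectI exI[of _ v] exI[of _ u]) simp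
      then show ?thesis by (rule UnI2)
    qed
  qed
next
  fix E assume "E \<in> {{u, v} | u v. adj T u v \<and> e u = e v \<and> u \<in> verts x \<and> v \<in> verts x}
     \<union> {{u, v} | u v. adj T u v \<and> e u = e v \<and> u \<notin> verts x \<and> v \<notin> verts x}
     \<union> {{u, v} | u v. adj T u v \<and> e u = e v \<and> u \<in> verts x \<and> v \<notin> verts x}"
  then show "E \<in> mono_edges T e" unfolding mono_edges_def by auto
qed

lemma mono_finite: "finite (mono_edges T e)"
proof -
  have "mono_edges T e \<subseteq> Pow (verts T)"
    unfolding mono_edges_def by (auto dest: adj_verts)
  then show ?thesis using verts_finite finite_subset by blast
qed

lemma card_cross:
  assumes wf: "wf_cotree T" and x: "x \<in> nodes T" and agree: "\<forall>v. v \<notin> verts x \<longrightarrow> e v = c v"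
  shows "card {{u, v} | u v. adj T u v \<and> e u = e v \<and> u \<in> verts x \<and> v \<notin> verts x}
     = (\<Sum>u\<in>verts x. Wt T x c (e u))"
proof -
  let ?S = "SIGMA u:verts x. {v \<in> nbr T x. c v = e u}"
  have nx: "nbr T x \<inter> verts x = {}" unfolding nbr_def by auto
  have eq: "{{u, v} | u v. adj T u v \<and> e u = e v \<and> u \<in> verts x \<and> v \<notin> verts x}
      = (\<lambda>(u,v). {u, v}) ` ?S"
  proof (rule set_eqI, rule iffI)
    fix E assume "E \<in> {{u, v} | u v. adj T u v \<and> e u = e v \<and> u \<in> verts x \<and> v \<notin> verts x}"
    then obtain u v where E: "E = {u,v}" "adj T u v" "e u = e v" "u \<in> verts x" "v \<notin> verts x" by blast
    then have "v \<in> nbr T x" using cross_char[OF wf x] by blast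
    moreover have "c v = e u" using E agree by auto
    ultimately have "(u,v) \<in> ?S" using E by simp
    then show "E \<in> (\<lambda>(u,v). {u, v}) ` ?S" unfolding E(1) by (intro image_eqI[where x="(u,v)"]) auto
  next
    fix E assume "E \<in> (\<lambda>(u,v). {u, v}) ` ?S"
    then obtain u v where E: "E = {u,v}" "u \<in> verts x" "v \<in> nbr T x" "c v = e u" by auto
    then have vx: "v \<notin> verts x" using nx by blast
    then have "adj T u v" using cross_char[OF wf x E(2) vx] E by blast
    moreover have "e u = e v" using E agree vx by auto
    ultimately show "E \<in> {{u, v} | u v. adj T u v \<and> e u = e v \<and> u \<in> verts x \<and> v \<notin> verts x}"
      unfolding E(1) using E vx by (intro CollectI exI[of _ u] exI[of _ v]) simp
  qed
  have inj: "inj_on (\<lambda>(u,v). {u, v}) ?S"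
  proof (rule inj_onI, clarify)
    fix u v u' v'
    assume "u \<in> verts x" "v \<in> nbr T x" "u' \<in> verts x" "v' \<in> nbr T x" "{u, v} = {u', v'}"
    then show "u = u' \<and> v = v'" using nx by (auto simp: doubleton_eq_iff)
  qed
  have fn: "finite (nbr T x)" unfolding nbr_def using verts_finite[of T] by auto
  have "card ((\<lambda>(u,v). {u, v}) ` ?S) = card ?S" using card_image[OF inj] .
  also have "\<dots> = (\<Sum>u\<in>verts x. card {v \<in> nbr T x. c v = e u})"
    using verts_finite fn by (subst card_SigmaI) auto
  finally show ?thesis unfolding eq Wt_def .
qed

lemma cost_split:
  assumes wf: "wf_cotree T" and x: "x \<in> nodes T"
    and agree: "\<forall>v. v \<notin> verts x \<longrightarrow> c' v = c v"
    and eqv: "\<forall>u\<in>verts x. \<forall>v\<in>verts x. (c' u = c' v \<longleftrightarrow> c u = c v)"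
  shows "card (mono_edges T c) + (\<Sum>u\<in>verts x. Wt T x c (c' u))
       = card (mono_edges T c') + (\<Sum>u\<in>verts x. Wt T x c (c u))"
proof -
  define In where "In e = {{u, v} | u v. adj T u v \<and> e u = e v \<and> u \<in> verts x \<and> v \<in> verts x}" for e :: "'a \<Rightarrow> nat"
  define Ou where "Ou e = {{u, v} | u v. adj T u v \<and> e u = e v \<and> u \<notin> verts x \<and> v \<notin> verts x}" for e :: "'a \<Rightarrow> nat"
  define Cr where "Cr e = {{u, v} | u v. adj T u v \<and> e u = e v \<and> u \<in> verts x \<and> v \<notin> verts x}" for e :: "'a \<Rightarrow> nat"
  have split: "mono_edges T e = In e \<union> Ou e \<union> Cr e" for e
    unfolding In_def Ou_def Cr_def by (rule mono_split)
  have fin: "finite (In e)" "finite (Ou e)" "finite (Cr e)" for e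
    using mono_finite[of T e] split[of e] by (auto intro: finite_subset)
  have p1: "E \<in> In e \<Longrightarrow> E \<subseteq> verts x \<and> E \<noteq> {}" for E e unfolding In_def by (elim CollectE exE conjE) simp
  have p2: "E \<in> Ou e \<Longrightarrow> E \<inter> verts x = {}" for E e unfolding Ou_def by (elim CollectE exE conjE) simp
  have p3: "E \<in> Cr e \<Longrightarrow> E \<inter> verts x \<noteq> {} \<and> \<not> E \<subseteq> verts x" for E e unfolding Cr_def by (elim CollectE exE conjE) simp
  have d1: "In e \<inter> Ou e = {}" for e
  proof (rule equals0I)
    fix E assume "E \<in> In e \<inter> Ou e" then show False using p1[of E e] p2[of E e] by auto
  qed
  have d2: "(In e \<union> Ou e) \<inter> Cr e = {}" for e
  proof (rule equals0I)
    fix E assume "E \<in> (In e \<union> Ou e) \<inter> Cr e" then show False using p1[of E e] p2[of E e] p3[of E e] by auto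
  qed
  have card: "card (mono_edges T e) = card (In e) + card (Ou e) + card (Cr e)" for e
    unfolding split[of e] using fin d1 d2 by (simp add: card_Un_disjoint)
  have "\<forall>u v. (adj T u v \<and> c' u = c' v \<and> u \<in> verts x \<and> v \<in> verts x) =
      (adj T u v \<and> c u = c v \<and> u \<in> verts x \<and> v \<in> verts x)" using eqv by blast
  then have "In c' = In c" unfolding In_def by simp
  moreover have "\<forall>u v. (adj T u v \<and> c' u = c' v \<and> u \<notin> verts x \<and> v \<notin> verts x) =
      (adj T u v \<and> c u = c v \<and> u \<notin> verts x \<and> v \<notin> verts x)" using agree by auto
  then have "Ou c' = Ou c" unfolding Ou_def by simp
  moreover have "card (Cr c') = (\<Sum>u\<in>verts x. Wt T x c (c' u))"
    unfolding Cr_def by (rule card_cross[OF wf x agree])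
  moreover have "card (Cr c) = (\<Sum>u\<in>verts x. Wt T x c (c u))"
    unfolding Cr_def by (rule card_cross[OF wf x]) simp
  ultimately show ?thesis using card[of c] card[of c'] by simp
qed



lemma opt_le:
  assumes wf: "wf_cotree T" and x: "x \<in> nodes T" and opt: "optimal_h_colouring T h c"
    and agree: "\<forall>v. v \<notin> verts x \<longrightarrow> c' v = c v"
    and eqv: "\<forall>u\<in>verts x. \<forall>v\<in>verts x. (c' u = c' v \<longleftrightarrow> c u = c v)"
    and hc: "h_colouring T h c'"
  shows "(\<Sum>u\<in>verts x. Wt T x c (c u)) \<le> (\<Sum>u\<in>verts x. Wt T x c (c' u))"
proof -
  have "card (mono_edges T c) \<le> card (mono_edges T c')" using opt hc unfolding optimal_h_colouring_def by blast
  then show ?thesis using cost_split[OF wf x agree eqv] by linarith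
qed

lemma regroup:
  fixes h :: nat
  assumes "finite X" "\<forall>u\<in>X. f u \<in> {1..h}"
  shows "(\<Sum>u\<in>X. g (f u)) = (\<Sum>j\<in>{1..h}. card {u\<in>X. f u = j} * g j)"
proof -
  have im: "f ` X \<subseteq> {1..h}" using assms(2) by blast
  have "(\<Sum>u\<in>X. g (f u)) = (\<Sum>j\<in>{1..h}. \<Sum>u\<in>{u. u \<in> X \<and> f u = j}. g (f u))"
    using sum.group[OF assms(1) finite_atLeastAtMost[of 1 h] im, of "\<lambda>u. g (f u)"] by simp
  also have "\<dots> = (\<Sum>j\<in>{1..h}. card {u\<in>X. f u = j} * g j)"
    by (rule sum.cong) auto
  finally show ?thesis .
qed

definition sw :: "nat \<Rightarrow> nat \<Rightarrow> nat \<Rightarrow> nat" where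
  "sw a b j = (if j = a then b else if j = b then a else j)"

lemma split2:
  fixes g :: "nat \<Rightarrow> nat"
  assumes "a \<in> H" "b \<in> H" "a \<noteq> b" "finite H"
  shows "(\<Sum>j\<in>H. g j) = g a + g b + (\<Sum>j\<in>H - {a, b}. g j)"
proof -
  have "(\<Sum>j\<in>H. g j) = g a + (\<Sum>j\<in>H - {a}. g j)" using assms by (simp add: sum.remove)
  also have "(\<Sum>j\<in>H - {a}. g j) = g b + (\<Sum>j\<in>H - {a} - {b}. g j)" using assms by (simp add: sum.remove)
  also have "H - {a} - {b} = H - {a, b}" by auto
  finally show ?thesis by simp
qed

lemma arith_contra:
  fixes na nb wa wb :: nat
  assumes "na < nb" "wa < wb" "na * wa + nb * wb + R \<le> na * wb + nb * wa + R"
  shows False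
proof -
  obtain s where s: "nb = na + s" "s > 0" using assms(1) less_imp_add_positive by blast
  obtain t where t: "wb = wa + t" "t > 0" using assms(2) less_imp_add_positive by blast
  have "na * wa + nb * wb = na * wb + nb * wa + s * t" unfolding s t by (simp add: algebra_simps)
  then show False using assms(3) s t by simp
qed

lemma swap_mono:
  assumes wf: "wf_cotree T" and x: "x \<in> nodes T" and opt: "optimal_h_colouring T h c"
    and a: "a \<in> {1..h}" and b: "b \<in> {1..h}" and lt: "Wt T x c a < Wt T x c b"
  shows "card (colour_class x c b) \<le> card (colour_class x c a)"
proof (rule ccontr)
  assume "\<not> ?thesis"
  then have nlt: "card (colour_class x c a) < card (colour_class x c b)" by simp
  have ab: "a \<noteq> b" using lt by auto
  have hc: "h_colouring T h c" using opt unfolding optimal_h_colouring_def by blast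
  have vx: "verts x \<subseteq> verts T" using nodes_verts[OF x] .
  define c' where "c' v = (if v \<in> verts x then sw a b (c v) else c v)" for v
  have agree: "\<forall>v. v \<notin> verts x \<longrightarrow> c' v = c v" unfolding c'_def by simp
  have swsw: "sw a b (sw a b j) = j" for j unfolding sw_def by auto
  have eqv: "\<forall>u\<in>verts x. \<forall>v\<in>verts x. (c' u = c' v \<longleftrightarrow> c u = c v)"
    unfolding c'_def by (metis swsw)
  have hc': "h_colouring T h c'"
    using hc a b unfolding h_colouring_def c'_def sw_def by auto
  have le: "(\<Sum>u\<in>verts x. Wt T x c (c u)) \<le> (\<Sum>u\<in>verts x. Wt T x c (sw a b (c u)))"
    using opt_le[OF wf x opt agree eqv hc'] unfolding c'_def by simp
  have rng: "\<forall>u\<in>verts x. c u \<in> {1..h}" using hc vx unfolding h_colouring_def by blast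
  define n where "n j = card {u\<in>verts x. c u = j}" for j
  define W where "W = Wt T x c"
  have e1: "(\<Sum>u\<in>verts x. W (c u)) = (\<Sum>j\<in>{1..h}. n j * W j)"
    unfolding n_def by (rule regroup[OF verts_finite rng])
  have e2: "(\<Sum>u\<in>verts x. W (sw a b (c u))) = (\<Sum>j\<in>{1..h}. n j * W (sw a b j))"
    unfolding n_def by (rule regroup[OF verts_finite rng])
  have rest: "(\<Sum>j\<in>{1..h} - {a, b}. n j * W (sw a b j)) = (\<Sum>j\<in>{1..h} - {a, b}. n j * W j)"
    by (rule sum.cong) (auto simp: sw_def)
  have s1: "(\<Sum>j\<in>{1..h}. n j * W j) = n a * W a + n b * W b + (\<Sum>j\<in>{1..h} - {a, b}. n j * W j)"
    by (rule split2[OF a b ab]) simp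
  have s2: "(\<Sum>j\<in>{1..h}. n j * W (sw a b j)) = n a * W b + n b * W a + (\<Sum>j\<in>{1..h} - {a, b}. n j * W j)"
    using split2[OF a b ab, of "\<lambda>j. n j * W (sw a b j)"] rest by (simp add: sw_def ab)
  have "n a * W a + n b * W b + (\<Sum>j\<in>{1..h} - {a, b}. n j * W j)
      \<le> n a * W b + n b * W a + (\<Sum>j\<in>{1..h} - {a, b}. n j * W j)"
    using le e1 e2 s1 s2 unfolding W_def by simp
  moreover have "n a < n b" using nlt unfolding n_def colour_class_def .
  ultimately show False using arith_contra lt unfolding W_def by blast
qed

lemma nbr_eq:
  assumes wf: "wf_cotree T" and p: "Node0 q r \<in> nodes T"
  shows "nbr T q = nbr T r"
proof -
  have w: "wf_cotree (Node0 q r)" using nodes_wf[OF wf p] .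
  have "nbr T q \<subseteq> nbr T r"
  proof
    fix v assume v: "v \<in> nbr T q"
    obtain u where u: "u \<in> verts q" using verts_ne[of q] by blast
    have a: "adj T u v" "v \<in> verts T" "v \<notin> verts q" using v u unfolding nbr_def by auto
    have vr: "v \<notin> verts r"
    proof
      assume "v \<in> verts r" then show False using zero_cross[OF wf p u] a(1) by blast
    qed
    have vp: "v \<notin> verts (Node0 q r)" using a(3) vr by simp
    have "\<forall>u'\<in>verts r. adj T u' v"
    proof
      fix u' assume "u' \<in> verts r"
      then show "adj T u' v" using adj_module[OF wf p _ _ vp a(1)] u by simp
    qed
    then show "v \<in> nbr T r" unfolding nbr_def using a vr by blast
  qed
  moreover have "nbr T r \<subseteq> nbr T q"
  proof
    fix v assume v: "v \<in> nbr T r"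
    obtain u where u: "u \<in> verts r" using verts_ne[of r] by blast
    have a: "adj T u v" "v \<in> verts T" "v \<notin> verts r" using v u unfolding nbr_def by auto
    have vq: "v \<notin> verts q"
    proof
      assume "v \<in> verts q"
      then have "\<not> adj T v u" using zero_cross[OF wf p _ u] by blast
      then show False using adj_sym[OF a(1)] by blast
    qed
    have vp: "v \<notin> verts (Node0 q r)" using a(3) vq by simp
    have "\<forall>u'\<in>verts q. adj T u' v"
    proof
      fix u' assume "u' \<in> verts q"
      then show "adj T u' v" using adj_module[OF wf p _ _ vp a(1)] u by simp
    qed
    then show "v \<in> nbr T q" unfolding nbr_def using a vq by blast
  qed
  ultimately show ?thesis by blast
qed

lemma key_le:
  fixes W cnt :: "nat \<Rightarrow> nat"
  assumes "cnt a \<le> M" "cnt b \<le> M"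
    and "W a * (M+1) + (M - cnt a) \<le> W b * (M+1) + (M - cnt b)"
  shows "W a \<le> W b \<and> (W a = W b \<longrightarrow> cnt b \<le> cnt a)"
proof (intro conjI impI)
  show "W a \<le> W b"
  proof (rule ccontr)
    assume "\<not> W a \<le> W b"
    then have "W b + 1 \<le> W a" by simp
    then have "(W b + 1) * (M+1) \<le> W a * (M+1)" by (rule mult_right_mono) simp
    then show False using assms(3) by (simp add: algebra_simps)
  qed
next
  assume "W a = W b"
  then show "cnt b \<le> cnt a" using assms by simp
qed

lemma sorted_order:
  fixes W cnt :: "nat \<Rightarrow> nat"
  assumes bnd: "\<forall>j. cnt j \<le> M" and mono: "\<forall>a\<in>{1..h}. \<forall>b\<in>{1..h}. W a < W b \<longrightarrow> cnt b \<le> cnt a"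
  defines "L \<equiv> sort_key (\<lambda>j. W j * (M+1) + (M - cnt j)) [1..<Suc h]"
  shows "distinct L" "set L = {1..h}" "length L = h" "sorted (map W L)"
    "\<forall>i j. i \<le> j \<longrightarrow> j < h \<longrightarrow> cnt (L!j) \<le> cnt (L!i)"
proof -
  show dL: "distinct L" "set L = {1..h}" "length L = h" unfolding L_def by auto
  have s: "sorted (map (\<lambda>j. W j * (M+1) + (M - cnt j)) L)" unfolding L_def by simp
  have kl: "W (L!i) \<le> W (L!j) \<and> (W (L!i) = W (L!j) \<longrightarrow> cnt (L!j) \<le> cnt (L!i))"
    if "i \<le> j" "j < h" for i j
  proof -
    have "W (L!i) * (M+1) + (M - cnt (L!i)) \<le> W (L!j) * (M+1) + (M - cnt (L!j))"
      using s that dL(3) unfolding sorted_iff_nth_mono by auto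
    then show ?thesis using key_le[of cnt "L!i" M "L!j" W] bnd by blast
  qed
  show "sorted (map W L)" unfolding sorted_iff_nth_mono using kl dL(3) by auto
  show "\<forall>i j. i \<le> j \<longrightarrow> j < h \<longrightarrow> cnt (L!j) \<le> cnt (L!i)"
  proof (intro allI impI)
    fix i j assume ij: "i \<le> j" "j < h"
    have inr: "L!i \<in> {1..h}" "L!j \<in> {1..h}" using dL ij nth_mem[of i L] nth_mem[of j L] by simp_all
    show "cnt (L!j) \<le> cnt (L!i)"
    proof (cases "W (L!i) = W (L!j)")
      case True then show ?thesis using kl[OF ij] by blast
    next
      case False then have "W (L!i) < W (L!j)" using kl[OF ij] by simp
      then show ?thesis using mono inr(1) inr(2) by blast
    qed
  qed
qed

lemma bij_shift:
  assumes "distinct L" "set L = {1..h}" "length L = h"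
  shows "bij_betw (\<lambda>i. L ! (i - 1)) {1..h} {1..h}"
proof -
  have inj: "inj_on (\<lambda>i. i - 1) {1..h}" unfolding inj_on_def by auto
  have im: "(\<lambda>i. i - 1) ` {1..h} = {..<h}"
  proof (rule set_eqI, rule iffI)
    fix k assume "k \<in> (\<lambda>i. i - 1) ` {1..h}" then show "k \<in> {..<h}" by auto
  next
    fix k assume k: "k \<in> {..<h}"
    have "Suc k \<in> {1..h}" using k by simp
    then show "k \<in> (\<lambda>i. i - 1) ` {1..h}" using image_eqI[of k "\<lambda>i. i - 1" "Suc k"] by simp
  qed
  have b1: "bij_betw (\<lambda>i. i - 1) {1..h} {..<h}" unfolding bij_betw_def using inj im by blast
  have b2: "bij_betw ((!) L) {..<h} {1..h}" using bij_betw_nth[of L] assms by simp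
  show ?thesis using bij_betw_trans[OF b1 b2] by (simp add: comp_def)
qed



lemma fix_step:
  assumes wf: "wf_cotree T" and p: "Node0 q r \<in> nodes T" and opt: "optimal_h_colouring T h c"
  shows "\<exists>c' \<pi> \<sigma>. optimal_h_colouring T h c' \<and> (\<forall>v. v \<notin> verts r \<longrightarrow> c' v = c v)
     \<and> bij_betw \<pi> {1..h} {1..h} \<and> (\<forall>v\<in>verts r. c' v = \<pi> (c v))
     \<and> class_ordering q h c' \<sigma> \<and> class_ordering r h c' \<sigma>"
proof -
  have wp: "wf_cotree (Node0 q r)" using nodes_wf[OF wf p] .
  then have disj: "verts q \<inter> verts r = {}" by simp
  have qn: "q \<in> nodes T" using nodes_trans[OF p, of q] by (simp add: nodes_self)
  have rn: "r \<in> nodes T" using nodes_trans[OF p, of r] by (simp add: nodes_self)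
  have hc: "h_colouring T h c" using opt unfolding optimal_h_colouring_def by blast
  define W where "W = Wt T q c"
  have Wr: "Wt T r c = W" unfolding W_def Wt_def using nbr_eq[OF wf p] by simp
  define M where "M = card (verts T)"
  define cq where "cq j = card (colour_class q c j)" for j
  define cr where "cr j = card (colour_class r c j)" for j
  have bq: "\<forall>j. cq j \<le> M"
    unfolding cq_def M_def colour_class_def
    using nodes_verts[OF qn] verts_finite[of T] by (auto intro!: card_mono)
  have br: "\<forall>j. cr j \<le> M"
    unfolding cr_def M_def colour_class_def
    using nodes_verts[OF rn] verts_finite[of T] by (auto intro!: card_mono)
  have mq: "\<forall>a\<in>{1..h}. \<forall>b\<in>{1..h}. W a < W b \<longrightarrow> cq b \<le> cq a"
    using swap_mono[OF wf qn opt] unfolding W_def cq_def by blast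
  have mr: "\<forall>a\<in>{1..h}. \<forall>b\<in>{1..h}. W a < W b \<longrightarrow> cr b \<le> cr a"
    using swap_mono[OF wf rn opt] unfolding Wr cr_def by blast
  define Lq where "Lq = sort_key (\<lambda>j. W j * (M+1) + (M - cq j)) [1..<Suc h]"
  define Lr where "Lr = sort_key (\<lambda>j. W j * (M+1) + (M - cr j)) [1..<Suc h]"
  note Sq = sorted_order[OF bq mq, folded Lq_def]
  note Sr = sorted_order[OF br mr, folded Lr_def]
  have mapeq: "map W Lq = map W Lr"
  proof -
    have "mset (map W Lq) = mset (map W Lr)" unfolding Lq_def Lr_def by simp
    then have "sort (map W Lr) = map W Lq" using properties_for_sort Sq(4) by blast
    moreover have "sort (map W Lr) = map W Lr" using sorted_sort_id Sr(4) by blast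
    ultimately show ?thesis by simp
  qed
  have bq': "bij_betw ((!) Lq) {..<h} {1..h}" using bij_betw_nth[of Lq] Sq by simp
  have br': "bij_betw ((!) Lr) {..<h} {1..h}" using bij_betw_nth[of Lr] Sr by simp
  define \<pi> where "\<pi> = (\<lambda>j. Lq ! (inv_into {..<h} ((!) Lr) j))"
  have bpi: "bij_betw \<pi> {1..h} {1..h}"
    unfolding \<pi>_def using bij_betw_trans[OF bij_betw_inv_into[OF br'] bq'] by (simp add: comp_def)
  have ipi: "inj_on \<pi> {1..h}" using bij_betw_imp_inj_on[OF bpi] .
  have piL: "\<pi> (Lr ! k) = Lq ! k" if "k < h" for k
    unfolding \<pi>_def using inv_into_f_f[OF bij_betw_imp_inj_on[OF br'], of k] that by simp
  have Wpi: "W (\<pi> j) = W j" if "j \<in> {1..h}" for j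
  proof -
    have "j \<in> set Lr" using that Sr(2) by simp
    then obtain k where k0: "k < length Lr" "Lr ! k = j" by (auto simp: in_set_conv_nth)
    then have k: "k < h" "j = Lr ! k" using Sr(3) by auto
    have "W (\<pi> j) = W (Lq ! k)" using piL k by simp
    also have "\<dots> = map W Lq ! k" using k Sq(3) by simp
    also have "\<dots> = map W Lr ! k" using mapeq by simp
    also have "\<dots> = W j" using k Sr(3) by simp
    finally show ?thesis .
  qed
  define c' where "c' v = (if v \<in> verts r then \<pi> (c v) else c v)" for v
  have agree: "\<forall>v. v \<notin> verts r \<longrightarrow> c' v = c v" unfolding c'_def by simp
  have rngr: "\<forall>v\<in>verts r. c v \<in> {1..h}" using hc nodes_verts[OF rn] unfolding h_colouring_def by blast
  have eqv: "\<forall>u\<in>verts r. \<forall>v\<in>verts r. (c' u = c' v \<longleftrightarrow> c u = c v)"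
  proof (intro ballI)
    fix u v assume uv: "u \<in> verts r" "v \<in> verts r"
    then have "c u \<in> {1..h}" "c v \<in> {1..h}" using rngr by auto
    then show "(c' u = c' v \<longleftrightarrow> c u = c v)" using uv inj_on_eq_iff[OF ipi] unfolding c'_def by simp
  qed
  have hc': "h_colouring T h c'"
    unfolding h_colouring_def
  proof
    fix v assume v: "v \<in> verts T"
    show "c' v \<in> {1..h}"
    proof (cases "v \<in> verts r")
      case True then show ?thesis unfolding c'_def using rngr bij_betw_apply[OF bpi] by simp
    next
      case False then show ?thesis unfolding c'_def using hc v unfolding h_colouring_def by simp
    qed
  qed
  have sumeq: "(\<Sum>u\<in>verts r. Wt T r c (c' u)) = (\<Sum>u\<in>verts r. Wt T r c (c u))"
    unfolding Wr by (rule sum.cong) (use Wpi rngr in \<open>simp_all add: c'_def\<close>)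
  have "card (mono_edges T c') = card (mono_edges T c)"
    using cost_split[OF wf rn agree eqv] sumeq by simp
  then have opt': "optimal_h_colouring T h c'"
    using opt hc' unfolding optimal_h_colouring_def by simp
  define \<sigma> where "\<sigma> i = Lq ! (i - 1)" for i
  have bs: "bij_betw \<sigma> {1..h} {1..h}" unfolding \<sigma>_def using bij_shift Sq by blast
  have ccq: "colour_class q c' j = colour_class q c j" for j
    unfolding colour_class_def c'_def using disj by auto
  have ccr: "colour_class r c' (Lq ! k) = colour_class r c (Lr ! k)" if k: "k < h" for k
  proof -
    have Lk: "Lr ! k \<in> {1..h}" using k Sr(2) Sr(3) nth_mem[of k Lr] by simp
    have "\<pi> (c v) = Lq ! k \<longleftrightarrow> c v = Lr ! k" if "v \<in> verts r" for v
    proof -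
      have "\<pi> (c v) = Lq ! k \<longleftrightarrow> \<pi> (c v) = \<pi> (Lr ! k)" using piL[OF k] by simp
      also have "\<dots> \<longleftrightarrow> c v = Lr ! k" using inj_on_eq_iff[OF ipi] rngr that Lk by simp
      finally show ?thesis .
    qed
    then show ?thesis unfolding colour_class_def c'_def by auto
  qed
  have coq: "class_ordering q h c' \<sigma>"
    unfolding class_ordering_def
  proof (intro conjI bs ballI impI)
    fix i j assume ij: "i \<in> {1..h}" "j \<in> {1..h}" "i \<le> j"
    have "cq (Lq ! (j - 1)) \<le> cq (Lq ! (i - 1))" using Sq(5) ij by auto
    then show "card (colour_class q c' (\<sigma> j)) \<le> card (colour_class q c' (\<sigma> i))"
      unfolding ccq \<sigma>_def cq_def .
  qed
  have cor: "class_ordering r h c' \<sigma>"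
    unfolding class_ordering_def
  proof (intro conjI bs ballI impI)
    fix i j assume ij: "i \<in> {1..h}" "j \<in> {1..h}" "i \<le> j"
    have "cr (Lr ! (j - 1)) \<le> cr (Lr ! (i - 1))" using Sr(5) ij by auto
    moreover have "i - 1 < h" "j - 1 < h" using ij by auto
    ultimately show "card (colour_class r c' (\<sigma> j)) \<le> card (colour_class r c' (\<sigma> i))"
      unfolding \<sigma>_def cr_def using ccr by simp
  qed
  have pc: "\<forall>v\<in>verts r. c' v = \<pi> (c v)" unfolding c'_def by simp
  show ?thesis using opt' agree bpi pc coq cor by blast
qed



lemma cc_local: "\<forall>v\<in>verts y. c v = c' v \<Longrightarrow> colour_class y c j = colour_class y c' j"
  unfolding colour_class_def by auto

lemma co_local: "\<forall>v\<in>verts y. c v = c' v \<Longrightarrow> class_ordering y h c \<sigma> = class_ordering y h c' \<sigma>"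
proof -
  assume a: "\<forall>v\<in>verts y. c v = c' v"
  have "colour_class y c = colour_class y c'" using cc_local[OF a] by (rule ext)
  then show ?thesis unfolding class_ordering_def by simp
qed

lemma sub_verts: "Node0 q r \<in> nodes x \<Longrightarrow> verts q \<subseteq> verts x \<and> verts r \<subseteq> verts x"
  using nodes_verts[of "Node0 q r" x] by auto

lemma prop_local:
  assumes a: "\<forall>v\<in>verts x. c v = c' v" and p: "property1 x h c"
  shows "property1 x h c'"
  unfolding property1_def
proof (intro allI impI)
  fix q r assume n: "Node0 q r \<in> nodes x"
  have aq: "\<forall>v\<in>verts q. c v = c' v" and ar: "\<forall>v\<in>verts r. c v = c' v"
    using a sub_verts[OF n] by blast+
  obtain \<sigma>q \<sigma>r where s: "class_ordering q h c \<sigma>q" "class_ordering r h c \<sigma>r"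
    "\<forall>i\<in>{1..min (chi (Node0 q r)) h}.
       \<sigma>q i = \<sigma>r i \<or> colour_class q c (\<sigma>q i) = {} \<or> colour_class r c (\<sigma>r i) = {}"
    using p n unfolding property1_def by blast
  show "\<exists>\<sigma>q \<sigma>r. class_ordering q h c' \<sigma>q \<and> class_ordering r h c' \<sigma>r \<and>
        (\<forall>i\<in>{1..min (chi (Node0 q r)) h}.
           \<sigma>q i = \<sigma>r i \<or> colour_class q c' (\<sigma>q i) = {} \<or> colour_class r c' (\<sigma>r i) = {})"
    using s co_local[OF aq] co_local[OF ar] cc_local[OF aq] cc_local[OF ar] by metis
qed

lemma cc_perm:
  assumes b: "bij_betw \<pi> {1..h} {1..h}" and rng: "\<forall>v\<in>verts y. c v \<in> {1..h}" and k: "k \<in> {1..h}"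
  shows "colour_class y (\<lambda>v. \<pi> (c v)) (\<pi> k) = colour_class y c k"
proof -
  have i: "inj_on \<pi> {1..h}" using bij_betw_imp_inj_on[OF b] .
  show ?thesis unfolding colour_class_def using inj_on_eq_iff[OF i] rng k by auto
qed

lemma co_perm:
  assumes b: "bij_betw \<pi> {1..h} {1..h}" and rng: "\<forall>v\<in>verts y. c v \<in> {1..h}"
    and co: "class_ordering y h c \<sigma>"
  shows "class_ordering y h (\<lambda>v. \<pi> (c v)) (\<lambda>i. \<pi> (\<sigma> i))"
proof -
  have bs: "bij_betw \<sigma> {1..h} {1..h}" using co unfolding class_ordering_def by blast
  have "bij_betw (\<pi> \<circ> \<sigma>) {1..h} {1..h}" using bij_betw_trans[OF bs b] .
  then have bc: "bij_betw (\<lambda>i. \<pi> (\<sigma> i)) {1..h} {1..h}" by (simp add: comp_def)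
  have cc: "colour_class y (\<lambda>v. \<pi> (c v)) (\<pi> (\<sigma> i)) = colour_class y c (\<sigma> i)" if "i \<in> {1..h}" for i
    using cc_perm[OF b rng bij_betw_apply[OF bs that]] .
  show ?thesis unfolding class_ordering_def
  proof (intro conjI bc ballI impI)
    fix i j assume ij: "i \<in> {1..h}" "j \<in> {1..h}" "i \<le> j"
    then show "card (colour_class y (\<lambda>v. \<pi> (c v)) (\<pi> (\<sigma> j))) \<le> card (colour_class y (\<lambda>v. \<pi> (c v)) (\<pi> (\<sigma> i)))"
      using co cc[OF ij(1)] cc[OF ij(2)] unfolding class_ordering_def by simp
  qed
qed

lemma prop_perm:
  assumes b: "bij_betw \<pi> {1..h} {1..h}" and rng: "\<forall>v\<in>verts x. c v \<in> {1..h}" and p: "property1 x h c"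
  shows "property1 x h (\<lambda>v. \<pi> (c v))"
  unfolding property1_def
proof (intro allI impI)
  fix q r assume n: "Node0 q r \<in> nodes x"
  have rq: "\<forall>v\<in>verts q. c v \<in> {1..h}" and rr: "\<forall>v\<in>verts r. c v \<in> {1..h}"
    using rng sub_verts[OF n] by blast+
  obtain \<sigma>q \<sigma>r where s: "class_ordering q h c \<sigma>q" "class_ordering r h c \<sigma>r"
    "\<forall>i\<in>{1..min (chi (Node0 q r)) h}.
       \<sigma>q i = \<sigma>r i \<or> colour_class q c (\<sigma>q i) = {} \<or> colour_class r c (\<sigma>r i) = {}"
    using p n unfolding property1_def by blast
  have bq: "bij_betw \<sigma>q {1..h} {1..h}" and br: "bij_betw \<sigma>r {1..h} {1..h}"
    using s unfolding class_ordering_def by blast+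
  have cond: "\<forall>i\<in>{1..min (chi (Node0 q r)) h}.
       \<pi> (\<sigma>q i) = \<pi> (\<sigma>r i) \<or> colour_class q (\<lambda>v. \<pi> (c v)) (\<pi> (\<sigma>q i)) = {}
        \<or> colour_class r (\<lambda>v. \<pi> (c v)) (\<pi> (\<sigma>r i)) = {}"
  proof
    fix i assume i: "i \<in> {1..min (chi (Node0 q r)) h}"
    then have ih: "i \<in> {1..h}" by simp
    show "\<pi> (\<sigma>q i) = \<pi> (\<sigma>r i) \<or> colour_class q (\<lambda>v. \<pi> (c v)) (\<pi> (\<sigma>q i)) = {}
        \<or> colour_class r (\<lambda>v. \<pi> (c v)) (\<pi> (\<sigma>r i)) = {}"
      using s(3) i cc_perm[OF b rq bij_betw_apply[OF bq ih]] cc_perm[OF b rr bij_betw_apply[OF br ih]]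
      by metis
  qed
  show "\<exists>\<sigma>q \<sigma>r. class_ordering q h (\<lambda>v. \<pi> (c v)) \<sigma>q \<and> class_ordering r h (\<lambda>v. \<pi> (c v)) \<sigma>r \<and>
        (\<forall>i\<in>{1..min (chi (Node0 q r)) h}.
           \<sigma>q i = \<sigma>r i \<or> colour_class q (\<lambda>v. \<pi> (c v)) (\<sigma>q i) = {} \<or> colour_class r (\<lambda>v. \<pi> (c v)) (\<sigma>r i) = {})"
    using co_perm[OF b rq s(1)] co_perm[OF b rr s(2)] cond by blast
qed

lemma prop_Leaf: "property1 (Leaf y) h c"
  unfolding property1_def by simp

lemma prop_Node1: "property1 q h c \<Longrightarrow> property1 r h c \<Longrightarrow> property1 (Node1 q r) h c"
  unfolding property1_def by auto

lemma prop_Node0: "property1 q h c \<Longrightarrow> property1 r h c \<Longrightarrow> class_ordering q h c \<sigma>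
  \<Longrightarrow> class_ordering r h c \<sigma> \<Longrightarrow> property1 (Node0 q r) h c"
  unfolding property1_def by auto



lemma main_ind:
  "wf_cotree T \<Longrightarrow> x \<in> nodes T \<Longrightarrow> optimal_h_colouring T h c \<Longrightarrow>
   \<exists>c'. optimal_h_colouring T h c' \<and> (\<forall>v. v \<notin> verts x \<longrightarrow> c' v = c v) \<and> property1 x h c'"
proof (induction x arbitrary: c)
  case (Leaf y)
  show ?case using Leaf.prems(3) prop_Leaf[of y h c] by (intro exI[of _ c]) simp
next
  case (Node1 q r)
  have qn: "q \<in> nodes T" using nodes_trans[OF Node1.prems(2), of q] by (simp add: nodes_self)
  have rn: "r \<in> nodes T" using nodes_trans[OF Node1.prems(2), of r] by (simp add: nodes_self)
  have disj: "verts q \<inter> verts r = {}" using nodes_wf[OF Node1.prems(1,2)] by simp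
  obtain c1 where c1: "optimal_h_colouring T h c1" "\<forall>v. v \<notin> verts q \<longrightarrow> c1 v = c v" "property1 q h c1"
    using Node1.IH(1)[OF Node1.prems(1) qn Node1.prems(3)] by blast
  obtain c2 where c2: "optimal_h_colouring T h c2" "\<forall>v. v \<notin> verts r \<longrightarrow> c2 v = c1 v" "property1 r h c2"
    using Node1.IH(2)[OF Node1.prems(1) rn c1(1)] by blast
  have "\<forall>v\<in>verts q. c1 v = c2 v" using c2(2) disj by auto
  then have "property1 q h c2" using prop_local c1(3) by blast
  then have "property1 (Node1 q r) h c2" using prop_Node1 c2(3) by blast
  moreover have "\<forall>v. v \<notin> verts (Node1 q r) \<longrightarrow> c2 v = c v" using c1(2) c2(2) by simp
  ultimately show ?case using c2(1) by blast
next
  case (Node0 q r)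
  have qn: "q \<in> nodes T" using nodes_trans[OF Node0.prems(2), of q] by (simp add: nodes_self)
  have rn: "r \<in> nodes T" using nodes_trans[OF Node0.prems(2), of r] by (simp add: nodes_self)
  have disj: "verts q \<inter> verts r = {}" using nodes_wf[OF Node0.prems(1,2)] by simp
  obtain c1 where c1: "optimal_h_colouring T h c1" "\<forall>v. v \<notin> verts q \<longrightarrow> c1 v = c v" "property1 q h c1"
    using Node0.IH(1)[OF Node0.prems(1) qn Node0.prems(3)] by blast
  obtain c2 where c2: "optimal_h_colouring T h c2" "\<forall>v. v \<notin> verts r \<longrightarrow> c2 v = c1 v" "property1 r h c2"
    using Node0.IH(2)[OF Node0.prems(1) rn c1(1)] by blast
  obtain c3 \<pi> \<sigma> where c3: "optimal_h_colouring T h c3" "\<forall>v. v \<notin> verts r \<longrightarrow> c3 v = c2 v"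
     "bij_betw \<pi> {1..h} {1..h}" "\<forall>v\<in>verts r. c3 v = \<pi> (c2 v)"
     "class_ordering q h c3 \<sigma>" "class_ordering r h c3 \<sigma>"
    using fix_step[OF Node0.prems(1,2) c2(1)] by blast
  have "\<forall>v\<in>verts q. c1 v = c3 v" using c2(2) c3(2) disj by auto
  then have pq: "property1 q h c3" using prop_local c1(3) by blast
  have rng: "\<forall>v\<in>verts r. c2 v \<in> {1..h}"
    using c2(1) nodes_verts[OF rn] unfolding optimal_h_colouring_def h_colouring_def by blast
  have "property1 r h (\<lambda>v. \<pi> (c2 v))" using prop_perm[OF c3(3) rng c2(3)] .
  moreover have "\<forall>v\<in>verts r. \<pi> (c2 v) = c3 v" using c3(4) by simp
  ultimately have pr: "property1 r h c3" using prop_local[of r "\<lambda>v. \<pi> (c2 v)" c3 h] by blast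
  have "property1 (Node0 q r) h c3" using prop_Node0[OF pq pr c3(5) c3(6)] .
  moreover have "\<forall>v. v \<notin> verts (Node0 q r) \<longrightarrow> c3 v = c v" using c1(2) c2(2) c3(2) by simp
  ultimately show ?case using c3(1) by blast
qed

theorem mainTheorem12:
  fixes T :: "'a cotree" and d h :: nat
  assumes "wf_cotree T"
    and "d \<le> chi T"
    and "h = chi T - d"
    and "\<exists>c. h_colouring T h c"
  shows "\<exists>c. optimal_h_colouring T h c \<and> property1 T h c"
proof -
  obtain c0 where c0: "h_colouring T h c0" using assms(4) by blast
  have "\<exists>c. h_colouring T h c \<and> (\<forall>c'. h_colouring T h c' \<longrightarrow> card (mono_edges T c) \<le> card (mono_edges T c'))"
    by (rule ex_has_least_nat[of "h_colouring T h" c0 "\<lambda>c. card (mono_edges T c)", OF c0])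
  then obtain c where c: "h_colouring T h c" "\<forall>c'. h_colouring T h c' \<longrightarrow> card (mono_edges T c) \<le> card (mono_edges T c')"
    by blast
  then have opt: "optimal_h_colouring T h c" unfolding optimal_h_colouring_def by blast
  obtain c' where "optimal_h_colouring T h c'" "property1 T h c'"
    using main_ind[OF assms(1) nodes_self opt] by blast
  then show ?thesis by blast
qed

end
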